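(* Let $O$ be the origin of $\mathbb{R}^3$ and $R>0$. Let $x:[0,\tau_1]\to\mathbb{R}^3$ be a twice continuously differentiable trajectory with nowhere-vanishing velocity, satisfying $\ddot x(\tau) = -\kappa(\tau)\,x(\tau)$ with $\kappa(\tau)>0$ for all $\tau$, with $A_0 = x(0)$, $|A_0|<R$, and let $B$ be the first point of the trajectory on the sphere $\{|p|=R\}$. Reparametrize the trajectory from $A_0$ to $B$ by arclength $\sigma\in[0,L_{A_0B}]$, where $L_{A_0B}$ is the arclength from $A_0$ to $B$. Define iteratively $\sigma_0=0$ and, for $t\ge 0$: $A_t$ is the point of the trajectory at arclength $\sigma_t$, $d_t$ is the unit tangent direction of the trajectory at $A_t$, $P_t = A_t + u\,d_t$ is the point where the straight ray from $A_t$ in direction $d_t$ meets the sphere $\{|p|=R\}$ (with $u\ge 0$, and $P_t=A_t$ if $A_t$ is on the sphere), $s_t = |A_tP_t|$, and $\sigma_{t+1}=\sigma_t+s_t$. Then $$\lim_{T\to\infty}\sum_{t=0}^{T} s_t = L_{A_0B}.$$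
   Context: This models an iterative ray-tracing step scheme inside the near-field ball of radius $R$ around a black hole centered at $O$, where gravity is approximated by Newtonian attraction toward the center: at each step the ray is advanced along its true (curved) path by the straight-line distance from the current point, along the current tangent direction, to the boundary sphere. $|A_tP_t|$ denotes Euclidean distance. *)

theory Defs
  imports "HOL-Analysis.Analysis"
begin

definition arc_len :: "(real \<Rightarrow> real^3) \<Rightarrow> real \<Rightarrow> real" where
  "arc_len x' \<tau> = integral {0..\<tau>} (\<lambda>r. norm (x' r))"

definition arc_time :: "(real \<Rightarrow> real^3) \<Rightarrow> real \<Rightarrow> real \<Rightarrow> real" where
  "arc_time x' \<tau>1 \<sigma> = (THE \<tau>. \<tau> \<in> {0..\<tau>1} \<and> arc_len x' \<tau> = \<sigma>)"

definition first_hit_time :: "(real \<Rightarrow> real^3) \<Rightarrow> real \<Rightarrow> real \<Rightarrow> real" where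
  "first_hit_time x \<tau>1 R = Inf {\<tau> \<in> {0..\<tau>1}. norm (x \<tau>) = R}"

definition sphere_hit :: "real \<Rightarrow> real^3 \<Rightarrow> real^3 \<Rightarrow> real^3" where
  "sphere_hit R A d =
     (if norm A = R then A else A + (THE u. u \<ge> 0 \<and> norm (A + u *\<^sub>R d) = R) *\<^sub>R d)"

definition ray_step :: "(real \<Rightarrow> real^3) \<Rightarrow> (real \<Rightarrow> real^3) \<Rightarrow> real \<Rightarrow> real \<Rightarrow> real \<Rightarrow> real" where
  "ray_step x x' \<tau>1 R \<sigma> =
     (let \<tau> = arc_time x' \<tau>1 \<sigma>; A = x \<tau>; d = (1 / norm (x' \<tau>)) *\<^sub>R x' \<tau>
      in dist A (sphere_hit R A d))"

primrec ray_sigma :: "(real \<Rightarrow> real^3) \<Rightarrow> (real \<Rightarrow> real^3) \<Rightarrow> real \<Rightarrow> real \<Rightarrow> nat \<Rightarrow> real" where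
  "ray_sigma x x' \<tau>1 R 0 = 0"
| "ray_sigma x x' \<tau>1 R (Suc t) = ray_sigma x x' \<tau>1 R t + ray_step x x' \<tau>1 R (ray_sigma x x' \<tau>1 R t)"

end

theory Submission imports Defs begin

lemma vd_inner:
  fixes f g :: "real \<Rightarrow> 'a::real_inner"
  assumes "(f has_vector_derivative f') (at t)" "(g has_vector_derivative g') (at t)"
  shows "((\<lambda>s. inner (f s) (g s)) has_real_derivative (inner f' (g t) + inner (f t) g')) (at t)"
  using has_derivative_inner[OF assms[unfolded has_vector_derivative_def]]
  unfolding has_field_derivative_def
  by (rule has_derivative_eq_rhs) (auto simp: algebra_simps)

lemma Uderiv:
  fixes p q :: "real \<Rightarrow> real"
  assumes dp: "(p has_real_derivative p') (at t)" and dq: "(q has_real_derivative q') (at t)"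
    and D: "(p t)^2 + R^2 - q t > 0"
  shows "((\<lambda>s. - p s + sqrt ((p s)^2 + R^2 - q s)) has_real_derivative
     (- p' + (2 * p t * p' - q') / (2 * sqrt ((p t)^2 + R^2 - q t)))) (at t)"
proof -
  have d1: "((\<lambda>s. (p s)^2 + R^2 - q s) has_real_derivative (2 * p t * p' - q')) (at t)"
    using DERIV_diff[OF DERIV_add[OF DERIV_power[OF dp, of 2] DERIV_const[of "R^2"]] dq]
    by (simp add: algebra_simps)
  have "((\<lambda>s. sqrt ((p s)^2 + R^2 - q s)) has_real_derivative
       inverse (sqrt ((p t)^2 + R^2 - q t)) / 2 * (2 * p t * p' - q')) (at t)"
    by (rule DERIV_chain2[OF DERIV_real_sqrt[OF D] d1])
  from DERIV_add[OF DERIV_minus[OF dp] this] show ?thesis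
    by (simp add: field_simps)
qed

lemma pderiv:
  fixes a b :: "real \<Rightarrow> real"
  assumes da: "(a has_real_derivative a') (at t)" and db: "(b has_real_derivative b') (at t)"
    and b: "b t > 0"
  shows "((\<lambda>s. a s / sqrt (b s)) has_real_derivative
     (a' * sqrt (b t) - a t * (b' / (2 * sqrt (b t)))) / (b t)) (at t)"
proof -
  have dv: "((\<lambda>s. sqrt (b s)) has_real_derivative inverse (sqrt (b t)) / 2 * b') (at t)"
    by (rule DERIV_chain2[OF DERIV_real_sqrt[OF b] db])
  from DERIV_divide[OF da dv] b show ?thesis
    by (simp add: field_simps)
qed

lemma key_ineq:
  fixes v k a q R :: real
  assumes v: "v > 0" and k: "k > 0" and cs: "a^2 \<le> q * v^2" and qR: "q < R^2"
  shows "0 \<le> v + (- (((v^2 - k * q) * v - a * ((- 2 * k * a) / (2 * v))) / (v^2))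
          + (2 * (a / v) * (((v^2 - k * q) * v - a * ((- 2 * k * a) / (2 * v))) / (v^2)) - 2 * a)
            / (2 * sqrt ((a / v)^2 + R^2 - q)))"
proof -
  define p where "p = a / v"
  have ap: "a = p * v" using v by (simp add: p_def)
  define P where "P = v - k * (q - p^2) / v"
  have PP: "((v^2 - k * q) * v - a * ((- 2 * k * a) / (2 * v))) / (v^2) = P"
    using v unfolding P_def ap by (simp add: field_simps power2_eq_square)
  have qp: "p^2 \<le> q" using cs v unfolding ap by (simp add: power_mult_distrib)
  have e: "v - P \<ge> 0" using v k qp unfolding P_def by simp
  have D: "p^2 < p^2 + R^2 - q" using qR by simp
  have "sqrt (p^2) < sqrt (p^2 + R^2 - q)" using D by (rule real_sqrt_less_mono)
  then have ps: "p < sqrt (p^2 + R^2 - q)" by simp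
  have D0: "p^2 + R^2 - q > 0" using D by (smt (verit) zero_le_power2)
  define S where "S = sqrt (p^2 + R^2 - q)"
  have sp: "S > 0" unfolding S_def using D0 by simp
  have ps': "p / S \<le> 1" using ps sp unfolding S_def[symmetric] by simp
  have "v + (- P + (2 * p * P - 2 * (p * v)) / (2 * S))
      = (v - P) * (1 - p / S)"
    using sp by (simp add: field_simps)
  also have "\<dots> \<ge> 0" using e ps' by simp
  finally have "0 \<le> v + (- P + (2 * p * P - 2 * (p * v)) / (2 * S))" .
  then show ?thesis unfolding PP p_def[symmetric] S_def using ap by simp
qed

lemma sphere_hit_dist:
  fixes A d :: "real^3"
  assumes A: "norm A < R" and d: "norm d = 1"
  shows "dist A (sphere_hit R A d) = - (A \<bullet> d) + sqrt ((A \<bullet> d)^2 + R^2 - A \<bullet> A)"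
    and "- (A \<bullet> d) + sqrt ((A \<bullet> d)^2 + R^2 - A \<bullet> A) \<ge> R - norm A"
proof -
  define p where "p = A \<bullet> d"
  define q where "q = A \<bullet> A"
  define S where "S = sqrt (p^2 + R^2 - q)"
  have R0: "R > 0" using A norm_ge_zero[of A] by linarith
  have q: "q = (norm A)^2" unfolding q_def by (simp add: power2_norm_eq_inner)
  have qR: "q < R^2" unfolding q using A by (simp add: power_strict_mono)
  have dd: "d \<bullet> d = 1" using d by (simp add: power2_norm_eq_inner[symmetric])
  have "sqrt (p^2) < S" unfolding S_def using qR by (intro real_sqrt_less_mono) simp
  then have pS: "\<bar>p\<bar> < S" by simp
  have S2: "S^2 = p^2 + R^2 - q" unfolding S_def using qR zero_le_power2[of p]
    by (intro real_sqrt_pow2) linarith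
  have nsq: "(norm (A + u *\<^sub>R d))^2 = q + 2 * u * p + u^2" for u
    unfolding power2_norm_eq_inner p_def q_def
    by (simp add: inner_add_left inner_add_right dd inner_commute power2_eq_square algebra_simps)
  have iff: "norm (A + u *\<^sub>R d) = R \<longleftrightarrow> q + 2 * u * p + u^2 = R^2" for u
  proof
    assume "norm (A + u *\<^sub>R d) = R" then show "q + 2 * u * p + u^2 = R^2" using nsq[of u] by simp
  next
    assume "q + 2 * u * p + u^2 = R^2"
    then have "(norm (A + u *\<^sub>R d))^2 = R^2" using nsq[of u] by simp
    then show "norm (A + u *\<^sub>R d) = R" using R0 by (simp add: power2_eq_iff_nonneg)
  qed
  define u0 where "u0 = - p + S"
  have u0: "u0 \<ge> 0 \<and> norm (A + u0 *\<^sub>R d) = R"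
    unfolding iff u0_def using pS S2 by (auto simp: power2_eq_square algebra_simps)
  have uniq: "u = u0" if "u \<ge> 0 \<and> norm (A + u *\<^sub>R d) = R" for u
  proof -
    have "(u + p)^2 = S^2" using that S2 unfolding iff by (simp add: power2_eq_square algebra_simps)
    then have "u + p = S \<or> u + p = - S" by (simp add: power2_eq_iff)
    then show ?thesis using that pS unfolding u0_def by auto
  qed
  have the: "(THE u. u \<ge> 0 \<and> norm (A + u *\<^sub>R d) = R) = u0"
    by (rule the_equality, rule u0, rule uniq, assumption)
  have "sphere_hit R A d = A + u0 *\<^sub>R d" unfolding sphere_hit_def the using A by simp
  then show "dist A (sphere_hit R A d) = - (A \<bullet> d) + sqrt ((A \<bullet> d)^2 + R^2 - A \<bullet> A)"
    using u0 d unfolding u0_def S_def p_def q_def by (simp add: dist_norm)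
  have "R \<le> norm A + norm (u0 *\<^sub>R d)" using u0 norm_triangle_ineq[of A "u0 *\<^sub>R d"] by simp
  then show "- (A \<bullet> d) + sqrt ((A \<bullet> d)^2 + R^2 - A \<bullet> A) \<ge> R - norm A"
    using u0 d unfolding u0_def S_def p_def q_def by simp
qed
theorem proposition2:
  fixes x x' x'' :: "real \<Rightarrow> real^3" and \<kappa> :: "real \<Rightarrow> real" and \<tau>1 R :: real
  assumes "R > 0"
    and "\<And>t. t \<in> {0..\<tau>1} \<Longrightarrow> (x has_vector_derivative x' t) (at t within {0..\<tau>1})"
    and "\<And>t. t \<in> {0..\<tau>1} \<Longrightarrow> (x' has_vector_derivative x'' t) (at t within {0..\<tau>1})"
    and "continuous_on {0..\<tau>1} x''"
    and "\<And>t. t \<in> {0..\<tau>1} \<Longrightarrow> x' t \<noteq> 0"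
    and "\<And>t. t \<in> {0..\<tau>1} \<Longrightarrow> \<kappa> t > 0 \<and> x'' t = - (\<kappa> t *\<^sub>R x t)"
    and "norm (x 0) < R"
    and "\<exists>t \<in> {0..\<tau>1}. norm (x t) = R"
  shows "(\<lambda>T. \<Sum>t\<le>T. ray_step x x' \<tau>1 R (ray_sigma x x' \<tau>1 R t))
           \<longlonglongrightarrow> arc_len x' (first_hit_time x \<tau>1 R)"
proof -
  have xc: "continuous_on {0..\<tau>1} x"
    using assms(2) by (meson continuous_on_eq_continuous_within has_vector_derivative_continuous)
  have x'c: "continuous_on {0..\<tau>1} x'"
    using assms(3) by (meson continuous_on_eq_continuous_within has_vector_derivative_continuous)
  have xi: "(x has_vector_derivative x' t) (at t)" if "t \<in> {0<..<\<tau>1}" for t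
    using assms(2)[of t] that at_within_interior[of t "{0..\<tau>1}"] by auto
  have x'i: "(x' has_vector_derivative x'' t) (at t)" if "t \<in> {0<..<\<tau>1}" for t
    using assms(3)[of t] that at_within_interior[of t "{0..\<tau>1}"] by auto
  define L where "L = arc_len x'"
  have vc: "continuous_on {0..\<tau>1} (\<lambda>r. norm (x' r))" by (intro continuous_intros x'c)
  have Ld: "(L has_real_derivative norm (x' t)) (at t within {0..\<tau>1})" if "t \<in> {0..\<tau>1}" for t
    unfolding L_def arc_len_def[abs_def] by (rule integral_has_real_derivative[OF vc that])
  have Lc: "continuous_on {0..\<tau>1} L"
    using Ld by (meson continuous_on_eq_continuous_within DERIV_continuous)
  have Li: "(L has_real_derivative norm (x' t)) (at t)" if "t \<in> {0<..<\<tau>1}" for t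
    using Ld[of t] that at_within_interior[of t "{0..\<tau>1}"] by auto
  have L0: "L 0 = 0" by (simp add: L_def arc_len_def)
  have Lmono: "L a < L b" if "a \<in> {0..\<tau>1}" "b \<in> {0..\<tau>1}" "a < b" for a b
  proof (rule DERIV_pos_imp_increasing_open[OF that(3)])
    fix y assume "a < y" "y < b"
    then have "y \<in> {0<..<\<tau>1}" using that by auto
    then show "\<exists>D. (L has_real_derivative D) (at y) \<and> D > 0"
      using Li assms(5) by force
  next
    show "continuous_on {a..b} L" using that by (auto intro: continuous_on_subset[OF Lc])
  qed
  have Lle: "L a \<le> L b \<longleftrightarrow> a \<le> b" if "a \<in> {0..\<tau>1}" "b \<in> {0..\<tau>1}" for a b
    using Lmono[OF that] Lmono[OF that(2,1)] by (cases a b rule: linorder_cases) auto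
  define tB where "tB = first_hit_time x \<tau>1 R"
  define H where "H = {\<tau> \<in> {0..\<tau>1}. norm (x \<tau>) = R}"
  have Hc: "closed H" unfolding H_def
    by (rule continuous_closed_preimage_constant) (auto intro: continuous_intros xc)
  have HtB: "tB \<in> H" unfolding tB_def first_hit_time_def H_def[symmetric]
    by (rule closed_contains_Inf[OF _ _ Hc]) (use assms(8) in \<open>auto simp: H_def bdd_below_def\<close>)
  have Hlow: "tB \<le> t" if "t \<in> H" for t
    unfolding tB_def first_hit_time_def H_def[symmetric]
    by (rule cInf_lower[OF that]) (auto simp: H_def bdd_below_def)
  have tBI: "tB \<in> {0..\<tau>1}" and xtB: "norm (x tB) = R" using HtB by (auto simp: H_def)
  have tB0: "tB > 0" using tBI xtB assms(7) by (cases "tB = 0") auto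
  have inside: "norm (x t) < R" if tt: "t \<in> {0..tB}" "t < tB" for t
  proof (rule ccontr)
    assume "\<not> norm (x t) < R"
    then have "norm (x 0) \<le> R" "R \<le> norm (x t)" using assms(7) by auto
    moreover have "continuous_on {0..t} (\<lambda>s. norm (x s))"
      using that tBI by (auto intro!: continuous_intros intro: continuous_on_subset[OF xc])
    ultimately obtain s where "0 \<le> s" "s \<le> t" "norm (x s) = R"
      using IVT'[of "\<lambda>s. norm (x s)" 0 R t] tt by auto
    then have "s \<in> H" using that tBI by (auto simp: H_def)
    then show False using Hlow[of s] \<open>s \<le> t\<close> that by auto
  qed
  define LB where "LB = L tB"
  have arc: "\<exists>\<tau> \<in> {0..tB}. L \<tau> = \<sigma> \<and> arc_time x' \<tau>1 \<sigma> = \<tau>" if sig: "\<sigma> \<in> {0..LB}" for \<sigma>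
  proof -
    obtain \<tau> where \<tau>: "0 \<le> \<tau>" "\<tau> \<le> tB" "L \<tau> = \<sigma>"
      using IVT'[of L 0 \<sigma> tB] sig L0 tBI continuous_on_subset[OF Lc, of "{0..tB}"]
      by (auto simp: LB_def)
    have "arc_time x' \<tau>1 \<sigma> = \<tau>" unfolding arc_time_def L_def[symmetric]
    proof (rule the_equality)
      show "\<tau> \<in> {0..\<tau>1} \<and> L \<tau> = \<sigma>" using \<tau> tBI by auto
    next
      fix s assume s: "s \<in> {0..\<tau>1} \<and> L s = \<sigma>"
      then show "s = \<tau>" using Lle[of s \<tau>] Lle[of \<tau> s] \<tau> tBI by auto
    qed
    then show ?thesis using \<tau> by auto
  qed
  define a where "a s = x s \<bullet> x' s" for s
  define b where "b s = x' s \<bullet> x' s" for s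
  define q where "q s = x s \<bullet> x s" for s
  define p where "p s = a s / sqrt (b s)" for s
  define U where "U s = - p s + sqrt ((p s)^2 + R^2 - q s)" for s
  have bpos: "b s > 0" if "s \<in> {0..\<tau>1}" for s
    using assms(5)[OF that] by (simp add: b_def)
  have nb: "norm (x' s) = sqrt (b s)" for s by (simp add: b_def norm_eq_sqrt_inner)
  have qn: "q s = (norm (x s))^2" for s by (simp add: q_def power2_norm_eq_inner)
  have ac: "continuous_on {0..\<tau>1} a" unfolding a_def by (intro continuous_intros xc x'c)
  have bc: "continuous_on {0..\<tau>1} b" unfolding b_def by (intro continuous_intros x'c)
  have qc: "continuous_on {0..\<tau>1} q" unfolding q_def by (intro continuous_intros xc)
  have pc: "continuous_on {0..\<tau>1} p" unfolding p_def[abs_def]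
    using bpos by (intro continuous_intros ac bc) (simp add: less_imp_neq[symmetric])
  have Uc: "continuous_on {0..\<tau>1} U" unfolding U_def
    by (intro continuous_intros pc qc)
  have da: "(a has_real_derivative (b t - \<kappa> t * q t)) (at t)" if "t \<in> {0<..<\<tau>1}" for t
  proof -
    have "t \<in> {0..\<tau>1}" using that by auto
    from vd_inner[OF xi[OF that] x'i[OF that]] assms(6)[OF this] show ?thesis
      by (simp add: a_def[abs_def] b_def[abs_def] q_def[abs_def] inner_commute mult.assoc)
  qed
  have db: "(b has_real_derivative (- 2 * \<kappa> t * a t)) (at t)" if "t \<in> {0<..<\<tau>1}" for t
  proof -
    have "t \<in> {0..\<tau>1}" using that by auto
    from vd_inner[OF x'i[OF that] x'i[OF that]] assms(6)[OF this] show ?thesis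
      by (simp add: a_def[abs_def] b_def[abs_def] q_def[abs_def] inner_commute mult.assoc)
  qed
  have dq: "(q has_real_derivative (2 * a t)) (at t)" if "t \<in> {0<..<\<tau>1}" for t
  proof -
    from vd_inner[OF xi[OF that] xi[OF that]] show ?thesis
      by (simp add: a_def[abs_def] b_def[abs_def] q_def[abs_def] inner_commute mult.assoc)
  qed
  have atB: "a tB \<ge> 0"
  proof (rule ccontr)
    assume neg: "\<not> a tB \<ge> 0"
    obtain \<delta> where \<delta>: "\<delta> > 0" "\<And>s. s \<in> {0..\<tau>1} \<Longrightarrow> dist s tB < \<delta> \<Longrightarrow> dist (a s) (a tB) < - a tB"
      using ac tBI neg unfolding continuous_on_iff by (metis neg_0_less_iff_less not_le)
    define s0 where "s0 = max (tB - \<delta>/2) (tB/2)"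
    have s0: "0 < s0" "s0 < tB" using tB0 \<delta> by (auto simp: s0_def)
    have "q tB \<le> q s0"
    proof (rule DERIV_nonpos_imp_decreasing_open[OF less_imp_le[OF s0(2)]])
      fix y assume y: "s0 < y" "y < tB"
      then have yi: "y \<in> {0<..<\<tau>1}" using s0 tBI by auto
      have "dist y tB < \<delta>" using y s0_def \<delta> by (auto simp: dist_real_def)
      then have "dist (a y) (a tB) < - a tB" using \<delta>(2)[of y] yi by auto
      then have "a y < 0" by (auto simp: dist_real_def)
      then show "\<exists>D. (q has_real_derivative D) (at y) \<and> D \<le> 0" using dq[OF yi] by auto
    next
      show "continuous_on {s0..tB} q" using s0 tBI by (auto intro: continuous_on_subset[OF qc])
    qed
    moreover have "q s0 < R^2" using inside[of s0] s0 assms(1) unfolding qn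
      by (simp add: power_strict_mono)
    ultimately show False using xtB unfolding qn by simp
  qed
  have UtB: "U tB = 0"
  proof -
    have "p tB \<ge> 0" unfolding p_def using atB bpos[OF tBI] by simp
    moreover have "q tB = R^2" unfolding qn xtB ..
    ultimately show ?thesis unfolding U_def by simp
  qed
  have key: "L \<tau> + U \<tau> \<le> LB" if tau: "\<tau> \<in> {0..tB}" "\<tau> < tB" for \<tau>
  proof -
    have "L \<tau> + U \<tau> \<le> L tB + U tB"
    proof (rule DERIV_nonneg_imp_increasing_open[OF less_imp_le[OF tau(2)], where f = "\<lambda>s. L s + U s"])
      fix y assume y: "\<tau> < y" "y < tB"
      then have yi: "y \<in> {0<..<\<tau>1}" using tau tBI by auto
      have yI: "y \<in> {0..\<tau>1}" using yi by auto
      have qy: "q y < R^2" using inside[of y] y tau assms(1) unfolding qn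
        by (simp add: power_strict_mono)
      have D: "(p y)^2 + R^2 - q y > 0" using qy by (smt (verit) zero_le_power2)
      have dp: "(p has_real_derivative
          ((b y - \<kappa> y * q y) * sqrt (b y) - a y * ((- 2 * \<kappa> y * a y) / (2 * sqrt (b y)))) / (b y)) (at y)"
        unfolding p_def[abs_def] by (rule pderiv[OF da[OF yi] db[OF yi] bpos[OF yI]])
      note dU = Uderiv[OF dp dq[OF yi] D]
      have dG: "((\<lambda>s. L s + U s) has_real_derivative
         norm (x' y) + (- (((b y - \<kappa> y * q y) * sqrt (b y) - a y * ((- 2 * \<kappa> y * a y) / (2 * sqrt (b y)))) / (b y))
          + (2 * p y * (((b y - \<kappa> y * q y) * sqrt (b y) - a y * ((- 2 * \<kappa> y * a y) / (2 * sqrt (b y)))) / (b y)) - 2 * a y)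
            / (2 * sqrt ((p y)^2 + R^2 - q y)))) (at y)"
        using DERIV_add[OF Li[OF yi] dU] unfolding U_def[abs_def] by simp
      have cs: "(a y)^2 \<le> q y * (sqrt (b y))^2"
        using Cauchy_Schwarz_ineq[of "x y" "x' y"] bpos[OF yI] by (simp add: a_def b_def q_def)
      have bs: "(sqrt (b y))^2 = b y" using bpos[OF yI] by simp
      have "0 \<le> norm (x' y) + (- (((b y - \<kappa> y * q y) * sqrt (b y) - a y * ((- 2 * \<kappa> y * a y) / (2 * sqrt (b y)))) / (b y))
          + (2 * p y * (((b y - \<kappa> y * q y) * sqrt (b y) - a y * ((- 2 * \<kappa> y * a y) / (2 * sqrt (b y)))) / (b y)) - 2 * a y)
            / (2 * sqrt ((p y)^2 + R^2 - q y)))"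
        using key_ineq[of "sqrt (b y)" "\<kappa> y" "a y" "q y" R] bpos[OF yI] assms(6)[OF yI] cs qy
        unfolding bs nb p_def by simp
      then show "\<exists>D. ((\<lambda>s. L s + U s) has_real_derivative D) (at y) \<and> D \<ge> 0" using dG by blast
    next
      show "continuous_on {\<tau>..tB} (\<lambda>s. L s + U s)" using tau tBI
        by (intro continuous_intros) (auto intro: continuous_on_subset[OF Lc] continuous_on_subset[OF Uc])
    qed
    then show ?thesis using UtB by (simp add: LB_def)
  qed
  have stepU: "ray_step x x' \<tau>1 R \<sigma> = U \<tau> \<and> U \<tau> \<ge> R - norm (x \<tau>)"
    if tau: "\<tau> \<in> {0..tB}" "\<tau> < tB" "arc_time x' \<tau>1 \<sigma> = \<tau>" for \<sigma> \<tau>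
  proof -
    have I: "\<tau> \<in> {0..\<tau>1}" using tau tBI by auto
    define d where "d = (1 / norm (x' \<tau>)) *\<^sub>R x' \<tau>"
    have d1: "norm d = 1" using assms(5)[OF I] by (simp add: d_def)
    have xin: "norm (x \<tau>) < R" using inside tau by auto
    have pd: "x \<tau> \<bullet> d = p \<tau>" unfolding d_def p_def a_def nb[symmetric]
      by (simp add: divide_inverse mult.commute)
    have "ray_step x x' \<tau>1 R \<sigma> = dist (x \<tau>) (sphere_hit R (x \<tau>) d)"
      unfolding ray_step_def Let_def tau(3) d_def ..
    then show ?thesis using sphere_hit_dist[OF xin d1] unfolding pd U_def q_def by simp
  qed
  have stepB: "ray_step x x' \<tau>1 R \<sigma> = 0" if "arc_time x' \<tau>1 \<sigma> = tB" for \<sigma>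
    unfolding ray_step_def Let_def that sphere_hit_def using xtB by simp
  define \<sigma> where "\<sigma> n = ray_sigma x x' \<tau>1 R n" for n
  define st where "st n = ray_step x x' \<tau>1 R (\<sigma> n)" for n
  have sumeq: "(\<Sum>t\<le>T. st t) = \<sigma> (Suc T)" for T
    by (induction T) (simp_all add: st_def \<sigma>_def)
  have stepinfo: "0 \<le> ray_step x x' \<tau>1 R s \<and> s + ray_step x x' \<tau>1 R s \<le> LB" if s: "s \<in> {0..LB}" for s
  proof -
    obtain \<tau> where \<tau>: "\<tau> \<in> {0..tB}" "L \<tau> = s" "arc_time x' \<tau>1 s = \<tau>" using arc[OF s] by blast
    show ?thesis
    proof (cases "\<tau> = tB")
      case True
      then show ?thesis using stepB[of s] \<tau> s by auto
    next
      case False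
      then have lt: "\<tau> < tB" using \<tau> by auto
      have "norm (x \<tau>) < R" using inside \<tau> lt by auto
      then show ?thesis using stepU[OF \<tau>(1) lt \<tau>(3)] key[OF \<tau>(1) lt] \<tau> by auto
    qed
  qed
  have inv: "\<sigma> n \<in> {0..LB}" for n
  proof (induction n)
    case 0
    have "0 \<le> LB" unfolding LB_def using L0 Lle[of 0 tB] tBI by auto
    then show ?case by (simp add: \<sigma>_def)
  next
    case (Suc n)
    then show ?case using stepinfo[OF Suc] by (simp add: \<sigma>_def)
  qed
  have inc: "incseq \<sigma>"
    by (rule incseq_SucI) (use stepinfo[OF inv] in \<open>simp add: \<sigma>_def\<close>)
  have reach: "\<exists>n. y < \<sigma> n" if y: "y < LB" for y
  proof (rule ccontr)
    assume "\<not> (\<exists>n. y < \<sigma> n)"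
    then have all: "\<sigma> n \<le> y" for n by (simp add: not_less)
    have y0: "0 \<le> y" using all[of 0] by (simp add: \<sigma>_def)
    obtain \<tau>y where \<tau>y: "\<tau>y \<in> {0..tB}" "L \<tau>y = y" using arc[of y] y y0 by auto
    have \<tau>ylt: "\<tau>y < tB" using \<tau>y y unfolding LB_def by (cases "\<tau>y = tB") auto
    have cy: "continuous_on {0..\<tau>y} (\<lambda>t. norm (x t))"
      using \<tau>y tBI by (auto intro!: continuous_intros intro: continuous_on_subset[OF xc])
    obtain m where m: "m \<in> {0..\<tau>y}" "\<And>t. t \<in> {0..\<tau>y} \<Longrightarrow> norm (x t) \<le> norm (x m)"
      using continuous_attains_sup[OF compact_Icc _ cy] \<tau>y by auto
    define c where "c = R - norm (x m)"
    have c: "c > 0" using inside[of m] m \<tau>y \<tau>ylt unfolding c_def by auto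
    have stc: "st n \<ge> c" for n
    proof -
      obtain \<tau> where \<tau>: "\<tau> \<in> {0..tB}" "L \<tau> = \<sigma> n" "arc_time x' \<tau>1 (\<sigma> n) = \<tau>"
        using arc[OF inv[of n]] by blast
      have "\<tau> \<le> \<tau>y" using Lle[of \<tau> \<tau>y] \<tau> \<tau>y all[of n] tBI by auto
      then have "\<tau> < tB" "norm (x \<tau>) \<le> norm (x m)" using \<tau>ylt m(2)[of \<tau>] \<tau> by auto
      then show ?thesis using stepU[OF \<tau>(1) \<open>\<tau> < tB\<close> \<tau>(3)] unfolding st_def c_def by auto
    qed
    have lin: "\<sigma> n \<ge> real n * c" for n
    proof (induction n)
      case 0 then show ?case by (simp add: \<sigma>_def)
    next
      case (Suc n) then show ?case using stc[of n]
        by (simp add: \<sigma>_def st_def algebra_simps)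
    qed
    obtain n where "y < real n * c" using reals_Archimedean3[OF c] by blast
    then show False using lin[of n] all[of n] by auto
  qed
  have lim: "\<sigma> \<longlonglongrightarrow> LB"
  proof (rule order_tendstoI)
    fix y assume "y < LB"
    then obtain N where N: "y < \<sigma> N" using reach by blast
    show "\<forall>\<^sub>F n in sequentially. y < \<sigma> n"
      using N incseqD[OF inc] by (intro eventually_sequentiallyI[of N]) (meson less_le_trans)
  next
    fix y assume "LB < y"
    then show "\<forall>\<^sub>F n in sequentially. \<sigma> n < y" using inv by (intro always_eventually allI) (meson atLeastAtMost_iff le_less_trans)
  qed
  have "(\<lambda>T. \<Sum>t\<le>T. st t) \<longlonglongrightarrow> LB" unfolding sumeq by (rule LIMSEQ_Suc[OF lim])
  then show ?thesis unfolding st_def \<sigma>_def LB_def L_def tB_def .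
qed

end
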